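(* Let $f:\mathbb{R}^d\to\mathbb{R}$ be convex, symmetric and sign invariant, $g(w,x)=f_\sigma(wx^\top-\bar w\bar x^\top)$, and suppose there is $\kappa>0$ with $$g(w,x)-g(\bar w,\bar x)\ge\kappa\|wx^\top-\bar w\bar x^\top\|_F\quad\text{for all }(w,x)\in\mathbb{R}^{d_1}\times\mathbb{R}^{d_2}.$$ Then for every $(w,x)$ with $wx^\top\ne\bar w\bar x^\top$ and every $Y\in\partial f_\sigma(wx^\top-\bar w\bar x^\top)$, $\sigma_1(Y)+\sigma_2(Y)\ge\kappa$.
   Context: Let $d=\min\{d_1,d_2\}$ and $\sigma:\mathbb{R}^{d_1\times d_2}\to\mathbb{R}^d_+$ give singular values in nonincreasing order (with $\sigma_2:=0$ if $d=1$). $f$ is symmetric if $f(\pi s)=f(s)$ for all permutation matrices $\pi$, sign invariant if $f(Ds)=f(s)$ for all diagonal $D$ with entries in $\{\pm1\}$; $f_\sigma=f\circ\sigma$ is then convex and $\partial f_\sigma$ is its convex subdifferential. $\bar w\in\mathbb{R}^{d_1}$, $\bar x\in\mathbb{R}^{d_2}$ are fixed; $\|\cdot\|_F$ is the Frobenius norm. *)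

theory Defs
  imports "HOL-Analysis.Analysis"
begin

definition idx :: "'a::finite \<Rightarrow> nat" where
  "idx = (SOME h. bij_betw h (UNIV::'a set) {..<CARD('a)})"

definition is_singvals :: "real^'n::finite^'m::finite \<Rightarrow> (nat \<Rightarrow> real) \<Rightarrow> bool" where
  "is_singvals A s \<longleftrightarrow>
     (\<forall>k. 0 \<le> s k) \<and> (\<forall>k. s (Suc k) \<le> s k) \<and>
     (\<forall>k\<ge>min CARD('m) CARD('n). s k = 0) \<and>
     (\<exists>(U::real^'m^'m) (V::real^'n^'n).
        orthogonal_matrix U \<and> orthogonal_matrix V \<and>
        A = U ** (\<chi> i j. if idx i = idx j then s (idx i) else 0) ** transpose V)"

(* singvals A k = sigma_{k+1}(A)  (0-indexed); equals 0 for k >= d *)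
definition singvals :: "real^'n::finite^'m::finite \<Rightarrow> nat \<Rightarrow> real" where
  "singvals A = (THE s. is_singvals A s)"

(* sigma : R^{d1 x d2} -> R^d, with the type 'd of cardinality d = min d1 d2 *)
definition sigma_vec :: "real^'n::finite^'m::finite \<Rightarrow> real^'d::finite" where
  "sigma_vec A = (\<chi> i. singvals A (idx i))"

definition symmetric_fun :: "(real^'d::finite \<Rightarrow> real) \<Rightarrow> bool" where
  "symmetric_fun f \<longleftrightarrow> (\<forall>p s. p permutes (UNIV::'d set) \<longrightarrow> f (\<chi> i. s $ p i) = f s)"

definition sign_invariant :: "(real^'d::finite \<Rightarrow> real) \<Rightarrow> bool" where
  "sign_invariant f \<longleftrightarrow> (\<forall>e s. (\<forall>i. e i = 1 \<or> e i = -1) \<longrightarrow> f (\<chi> i. e i * s $ i) = f s)"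

(* convex subdifferential, w.r.t. the trace (Frobenius) inner product *)
definition subdiff :: "('a::real_inner \<Rightarrow> real) \<Rightarrow> 'a \<Rightarrow> 'a set" where
  "subdiff F X = {Y. \<forall>Z. F Z \<ge> F X + inner Y (Z - X)}"

definition outer :: "real^'m::finite \<Rightarrow> real^'n::finite \<Rightarrow> real^'n^'m" where
  "outer w x = (\<chi> i j. w $ i * x $ j)"

end

theory Submission
  imports Defs "HOL-Computational_Algebra.Polynomial"
begin

lemma idx_bij: "bij_betw (idx::'a::finite \<Rightarrow> nat) UNIV {..<CARD('a)}"
proof -
  have "\<exists>h. bij_betw h (UNIV::'a set) {..<CARD('a)}"
    using ex_bij_betw_finite_nat[of "UNIV::'a set"] by (simp add: atLeast0LessThan)
  then show ?thesis unfolding idx_def by (rule someI_ex)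
qed

lemma idx_inj: "inj (idx::'a::finite \<Rightarrow> nat)"
  using idx_bij bij_betw_def by blast

lemma idx_eq_iff[simp]: "idx (i::'a::finite) = idx j \<longleftrightarrow> i = j"
  using idx_inj by (auto dest: injD)

lemma idx_less[simp]: "idx (i::'a::finite) < CARD('a)"
  using idx_bij bij_betwE by blast

lemma idx_surj: "k < CARD('a) \<Longrightarrow> \<exists>i::'a::finite. idx i = k"
  using idx_bij unfolding bij_betw_def by (metis imageE lessThan_iff)

lemma inner_outer: "inner (M::real^'n::finite^'m::finite) (outer a b) = inner a (M *v b)"
  by (simp add: inner_vec_def outer_def matrix_vector_mult_def sum_distrib_left
      algebra_simps sum_distrib_right)

lemma normsq_vec: "(norm (x::real^'n::finite))^2 = (\<Sum>i\<in>UNIV. (x$i)^2)"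
  unfolding power2_norm_eq_inner by (simp add: inner_vec_def power2_eq_square)

lemma normsq_outer2:
  "(norm (outer (a::real^'m::finite) (b::real^'n::finite) - outer c e))^2
     = (a\<bullet>a)*(b\<bullet>b) + (c\<bullet>c)*(e\<bullet>e) - 2*(a\<bullet>c)*(b\<bullet>e)"
proof -
  have "(norm (outer a b - outer c e))^2 = (\<Sum>i\<in>UNIV. \<Sum>j\<in>UNIV. (a$i*b$j - c$i*e$j)^2)"
    unfolding power2_norm_eq_inner by (simp add: inner_vec_def outer_def power2_eq_square)
  also have "\<dots> = (\<Sum>i\<in>UNIV. \<Sum>j\<in>UNIV. (a$i*a$i)*(b$j*b$j) + (c$i*c$i)*(e$j*e$j) - 2*((a$i*c$i)*(b$j*e$j)))"
    by (intro sum.cong refl) (simp add: power2_eq_square algebra_simps)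
  also have "\<dots> = (a\<bullet>a)*(b\<bullet>b) + (c\<bullet>c)*(e\<bullet>e) - 2*(a\<bullet>c)*(b\<bullet>e)"
    by (simp add: inner_vec_def sum_product sum.distrib sum_subtractf sum_distrib_left[of 2] mult.assoc)
  finally show ?thesis .
qed

lemma match_cs:
  fixes x :: "real^'m::finite" and y :: "real^'n::finite" and w :: "'m \<Rightarrow> real"
  assumes wL: "\<forall>i. \<bar>w i\<bar> \<le> L"
  shows "(\<Sum>i\<in>UNIV. \<Sum>j\<in>UNIV. if idx i = idx j then w i * x$i * y$j else 0) \<le> L * norm x * norm y"
proof -
  define P where "P = {(i::'m,j::'n). idx i = idx j}"
  have finP: "finite P" by simp
  have L0: "0 \<le> L" using wL by (meson abs_ge_zero order.trans)
  have injf: "inj_on fst P" unfolding P_def inj_on_def by auto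
  have injs: "inj_on snd P" unfolding P_def inj_on_def by (auto, metis idx_eq_iff)
  have "(\<Sum>i\<in>UNIV. \<Sum>j\<in>UNIV. if idx i = idx j then w i * x$i * y$j else 0)
      = (\<Sum>p\<in>UNIV. if p \<in> P then w (fst p) * x$fst p * y$snd p else 0)"
    by (simp add: sum.cartesian_product P_def case_prod_beta UNIV_Times_UNIV[symmetric] del: UNIV_Times_UNIV)
  also have "\<dots> = (\<Sum>p\<in>P. w (fst p) * x$fst p * y$snd p)"
    by (simp add: sum.If_cases)
  also have "\<dots> \<le> (\<Sum>p\<in>P. L * (\<bar>x$fst p\<bar> * \<bar>y$snd p\<bar>))"
  proof (rule sum_mono)
    fix p
    have "w (fst p) * x$fst p * y$snd p \<le> \<bar>w (fst p)\<bar> * (\<bar>x$fst p\<bar> * \<bar>y$snd p\<bar>)"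
      by (simp add: abs_mult mult.assoc abs_le_iff) (metis abs_ge_self abs_mult)
    also have "\<dots> \<le> L * (\<bar>x$fst p\<bar> * \<bar>y$snd p\<bar>)"
      using wL by (intro mult_right_mono) auto
    finally show "w (fst p) * x$fst p * y$snd p \<le> L * (\<bar>x$fst p\<bar> * \<bar>y$snd p\<bar>)" .
  qed
  also have "\<dots> = L * (\<Sum>p\<in>P. \<bar>x$fst p\<bar> * \<bar>y$snd p\<bar>)"
    by (simp add: sum_distrib_left)
  also have "\<dots> \<le> L * (norm x * norm y)"
  proof (rule mult_left_mono[OF _ L0])
    have cs: "(\<Sum>p\<in>P. \<bar>x$fst p\<bar> * \<bar>y$snd p\<bar>)^2 \<le> (\<Sum>p\<in>P. \<bar>x$fst p\<bar>^2) * (\<Sum>p\<in>P. \<bar>y$snd p\<bar>^2)"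
      by (rule Cauchy_Schwarz_ineq_sum)
    have "(\<Sum>p\<in>P. \<bar>x$fst p\<bar>^2) = (\<Sum>i\<in>fst`P. (x$i)^2)"
      by (simp add: sum.reindex[OF injf])
    also have "\<dots> \<le> (\<Sum>i\<in>UNIV. (x$i)^2)"
      by (rule sum_mono2) auto
    finally have c1: "(\<Sum>p\<in>P. \<bar>x$fst p\<bar>^2) \<le> (norm x)^2" by (simp add: normsq_vec)
    have "(\<Sum>p\<in>P. \<bar>y$snd p\<bar>^2) = (\<Sum>i\<in>snd`P. (y$i)^2)"
      by (simp add: sum.reindex[OF injs])
    also have "\<dots> \<le> (\<Sum>i\<in>UNIV. (y$i)^2)"
      by (rule sum_mono2) auto
    finally have c2: "(\<Sum>p\<in>P. \<bar>y$snd p\<bar>^2) \<le> (norm y)^2" by (simp add: normsq_vec)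
    have "(\<Sum>p\<in>P. \<bar>x$fst p\<bar>^2) * (\<Sum>p\<in>P. \<bar>y$snd p\<bar>^2) \<le> (norm x)^2 * (norm y)^2"
      by (rule mult_mono[OF c1 c2]) (auto intro: sum_nonneg)
    with cs have "(\<Sum>p\<in>P. \<bar>x$fst p\<bar> * \<bar>y$snd p\<bar>)^2 \<le> (norm x * norm y)^2"
      by (simp add: power_mult_distrib)
    then show "(\<Sum>p\<in>P. \<bar>x$fst p\<bar> * \<bar>y$snd p\<bar>) \<le> norm x * norm y"
      by (rule power2_le_imp_le) simp
  qed
  finally show ?thesis by (simp add: mult.assoc)
qed

lemma core:
  fixes a c :: "real^'m::finite" and b e :: "real^'n::finite" and w :: "'m \<Rightarrow> real"
  assumes wL: "\<forall>i. \<bar>w i\<bar> \<le> L"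
  shows "(\<Sum>i\<in>UNIV. \<Sum>j\<in>UNIV. if idx i = idx j then w i * (a$i*b$j - c$i*e$j) else 0)
           \<le> 2 * L * norm (outer a b - outer c e)"
proof -
  have L0: "0 \<le> L" using wL by (meson abs_ge_zero order.trans)
  define \<tau> where "\<tau> = (a\<bullet>c)/(a\<bullet>a)"
  define c' where "c' = c - \<tau> *\<^sub>R a"
  define b' where "b' = b - \<tau> *\<^sub>R e"
  have ac': "a \<bullet> c' = 0"
  proof (cases "a = 0")
    case True then show ?thesis by (simp add: c'_def)
  next
    case False then show ?thesis by (simp add: c'_def \<tau>_def inner_diff_right)
  qed
  have X: "outer a b - outer c e = outer a b' - outer c' e"
    by (simp add: outer_def vec_eq_iff b'_def c'_def algebra_simps)
  have "(\<Sum>i\<in>UNIV. \<Sum>j\<in>UNIV. if idx i = idx j then w i * (a$i*b$j - c$i*e$j) else 0)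
      = (\<Sum>i\<in>UNIV. \<Sum>j\<in>UNIV. if idx i = idx j then w i * a$i * b'$j else 0)
        + (\<Sum>i\<in>UNIV. \<Sum>j\<in>UNIV. if idx i = idx j then (- w i) * c'$i * e$j else 0)"
    by (simp add: sum.distrib[symmetric] b'_def c'_def algebra_simps if_distrib cong: if_cong)
  also have "\<dots> \<le> L * norm a * norm b' + L * norm c' * norm e"
    by (intro add_mono match_cs) (use wL in auto)
  also have "\<dots> \<le> 2 * L * norm (outer a b - outer c e)"
  proof -
    define p where "p = norm a * norm b'"
    define q where "q = norm c' * norm e"
    have N: "(norm (outer a b - outer c e))^2 = p^2 + q^2"
      unfolding X normsq_outer2 ac' p_def q_def
      by (simp add: power_mult_distrib power2_norm_eq_inner)
    have p0: "0 \<le> p" "0 \<le> q" by (simp_all add: p_def q_def)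
    have "p \<le> norm (outer a b - outer c e)"
      by (rule power2_le_imp_le) (use N p0 in auto)
    moreover have "q \<le> norm (outer a b - outer c e)"
      by (rule power2_le_imp_le) (use N p0 in auto)
    ultimately have "p + q \<le> 2 * norm (outer a b - outer c e)" by simp
    then have "L * (p + q) \<le> L * (2 * norm (outer a b - outer c e))"
      by (rule mult_left_mono[OF _ L0])
    then show ?thesis by (simp add: p_def q_def algebra_simps)
  qed
  finally show ?thesis .
qed

lemma diag_bound:
  fixes a c :: "real^'m::finite" and b e :: "real^'n::finite" and s :: "nat \<Rightarrow> real"
  assumes s0: "\<forall>k. 0 \<le> s k" and sdec: "\<forall>k. s (Suc k) \<le> s k"
  shows "inner (\<chi> i j. if idx i = idx j then s (idx i) else 0 :: real^'n^'m) (outer a b - outer c e)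
           \<le> (s 0 + s 1) * norm (outer a b - outer c e)"
proof -
  let ?X = "outer a b - outer c e"
  have anti: "s k \<le> s j" if "j \<le> k" for j k
    by (rule lift_Suc_antimono_le[of s, OF _ that]) (use sdec in blast)
  obtain i0 :: 'm where i0: "idx i0 = 0" using idx_surj[of 0] by auto
  obtain j0 :: 'n where j0: "idx j0 = 0" using idx_surj[of 0] by auto
  define t where "t k = (if k = 0 then s 1 else s k)" for k
  have tL: "\<forall>i::'m. \<bar>t (idx i)\<bar> \<le> s 1"
    using s0 anti by (auto simp: t_def)
  have eq: "inner (\<chi> i j. if idx i = idx j then s (idx i) else 0 :: real^'n^'m) ?X
     = (\<Sum>i\<in>UNIV. \<Sum>j\<in>UNIV. if idx i = idx j then (if idx i = 0 then s 0 - s 1 else 0) * ?X$i$j else 0)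
       + (\<Sum>i\<in>UNIV. \<Sum>j\<in>UNIV. if idx i = idx j then t (idx i) * (a$i*b$j - c$i*e$j) else 0)"
    unfolding inner_vec_def sum.distrib[symmetric]
    by (intro sum.cong refl) (auto simp: outer_def t_def algebra_simps)
  have ii: "idx i = 0 \<longleftrightarrow> i = i0" for i :: 'm using i0 idx_eq_iff by metis
  have jj: "idx j = 0 \<longleftrightarrow> j = j0" for j :: 'n using j0 idx_eq_iff by metis
  have c1: "(idx i = idx j \<and> idx i = 0) = (i = i0 \<and> j = j0)" for i :: 'm and j :: 'n
    using ii jj i0 j0 by metis
  have "(\<Sum>i\<in>UNIV. \<Sum>j\<in>UNIV. if idx i = idx j then (if idx i = 0 then s 0 - s 1 else 0) * ?X$i$j else 0)
      = (\<Sum>i\<in>UNIV. if i = i0 then (\<Sum>j\<in>UNIV. if j = j0 then (s 0 - s 1) * ?X$i$j else 0) else 0)"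
    apply (intro sum.cong refl)
    apply (auto simp: ii jj i0 eq_commute[of 0])
    apply (rule sum.neutral)
    apply simp
    done
  also have "\<dots> = (s 0 - s 1) * ?X$i0$j0" by simp
  also have "\<dots> \<le> (s 0 - s 1) * norm ?X"
  proof (rule mult_left_mono)
    have "?X$i0$j0 \<le> \<bar>?X$i0$j0\<bar>" by simp
    also have "\<dots> \<le> norm (?X$i0)" by (rule component_le_norm_cart)
    also have "\<dots> \<le> norm ?X" by (rule Finite_Cartesian_Product.norm_nth_le)
    finally show "?X$i0$j0 \<le> norm ?X" .
    show "0 \<le> s 0 - s 1" using sdec by (simp add: algebra_simps)
  qed
  finally have S1: "(\<Sum>i\<in>UNIV. \<Sum>j\<in>UNIV. if idx i = idx j then (if idx i = 0 then s 0 - s 1 else 0) * ?X$i$j else 0)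
       \<le> (s 0 - s 1) * norm ?X" .
  have S2: "(\<Sum>i\<in>UNIV. \<Sum>j\<in>UNIV. if idx i = idx j then t (idx i) * (a$i*b$j - c$i*e$j) else 0)
       \<le> 2 * s 1 * norm ?X"
    using core[of "\<lambda>i. t (idx i)" "s 1" a b c e] tL by blast
  show ?thesis unfolding eq using S1 S2 by (simp add: algebra_simps)
qed

lemma inner_orth:
  assumes "orthogonal_matrix (Q::real^'n::finite^'n)"
  shows "inner (Q *v x) (Q *v y) = inner x y"
proof -
  have "inner (Q *v x) (Q *v y) = inner x (transpose Q *v (Q *v y))"
    using dot_lmul_matrix[of x "transpose Q" "Q *v y"] by (simp del: transpose_matrix_vector)
  also have "\<dots> = inner x y"
    using assms by (simp add: matrix_vector_mul_assoc orthogonal_matrix_def del: transpose_matrix_vector)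
  finally show ?thesis .
qed

lemma inner_svd_outer:
  fixes U :: "real^'m::finite^'m" and V :: "real^'n::finite^'n" and D :: "real^'n^'m"
  shows "inner (U ** D ** transpose V) (outer a b)
       = inner D (outer (transpose U *v a) (transpose V *v b))"
proof -
  have "inner (U ** D ** transpose V) (outer a b) = inner a (U *v (D *v (transpose V *v b)))"
    by (simp add: inner_outer matrix_vector_mul_assoc matrix_mul_assoc del: transpose_matrix_vector)
  also have "\<dots> = inner (transpose U *v a) (D *v (transpose V *v b))"
    by (simp add: dot_lmul_matrix[symmetric])
  also have "\<dots> = inner D (outer (transpose U *v a) (transpose V *v b))"
    by (simp add: inner_outer del: transpose_matrix_vector)
  finally show ?thesis .
qed

lemma is_singvals_bound:
  fixes Y :: "real^'n::finite^'m::finite"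
  assumes "is_singvals Y s"
  shows "inner Y (outer a b - outer c e) \<le> (s 0 + s 1) * norm (outer a b - outer c e)"
proof -
  from assms obtain U V where U: "orthogonal_matrix (U::real^'m^'m)" and V: "orthogonal_matrix (V::real^'n^'n)"
    and Y: "Y = U ** (\<chi> i j. if idx i = idx j then s (idx i) else 0) ** transpose V"
    and s0: "\<forall>k. 0 \<le> s k" and sd: "\<forall>k. s (Suc k) \<le> s k"
    unfolding is_singvals_def by blast
  define D :: "real^'n^'m" where "D = (\<chi> i j. if idx i = idx j then s (idx i) else 0)"
  let ?a = "transpose U *v a" and ?b = "transpose V *v b" and ?c = "transpose U *v c" and ?e = "transpose V *v e"
  have Ut: "orthogonal_matrix (transpose U)" and Vt: "orthogonal_matrix (transpose V)" using U V by simp_all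
  have "inner Y (outer a b - outer c e) = inner D (outer ?a ?b - outer ?c ?e)"
    unfolding Y D_def[symmetric] inner_diff_right inner_svd_outer ..
  also have "\<dots> \<le> (s 0 + s 1) * norm (outer ?a ?b - outer ?c ?e)"
    unfolding D_def by (rule diag_bound[OF s0 sd])
  also have "norm (outer ?a ?b - outer ?c ?e) = norm (outer a b - outer c e)"
  proof -
    have "(norm (outer ?a ?b - outer ?c ?e))^2 = (norm (outer a b - outer c e))^2"
      unfolding normsq_outer2 inner_orth[OF Ut] inner_orth[OF Vt] ..
    then show ?thesis by simp
  qed
  finally show ?thesis .
qed

lemma mm_diff_left: "(A::real^'n::finite^'m::finite) ** (B - C) = A ** B - A ** (C::real^'k::finite^'n)"
  by (simp add: matrix_matrix_mult_def vec_eq_iff sum_subtractf algebra_simps)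

lemma mm_diff_right: "((B::real^'n::finite^'m::finite) - C) ** (A::real^'k::finite^'n) = B ** A - C ** A"
  by (simp add: matrix_matrix_mult_def vec_eq_iff sum_subtractf algebra_simps)

lemma mm_mat_right: "(A::real^'n::finite^'m::finite) ** mat x = x *\<^sub>R A"
  by (simp add: matrix_matrix_mult_def vec_eq_iff mat_def if_distrib cong: if_cong)

lemma DtD:
  fixes s :: "nat \<Rightarrow> real"
  assumes sz: "\<forall>k\<ge>min CARD('m::finite) CARD('n::finite). s k = 0"
  shows "transpose (\<chi> i j. if idx i = idx j then s (idx i) else 0 :: real^'n^'m)
          ** (\<chi> i j. if idx i = idx j then s (idx i) else 0 :: real^'n^'m)
        = (\<chi> j k. if j = k then (s (idx j))^2 else 0)"
proof -
  have "(\<Sum>i\<in>UNIV. (if idx (i::'m) = idx (j::'n) then s (idx i) else 0) *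
                     (if idx i = idx k then s (idx i) else 0))
        = (if j = k then (s (idx j))^2 else 0)" for j k :: 'n
  proof (cases "j = k")
    case False
    then have "idx j \<noteq> idx k" by simp
    then show ?thesis using False by (intro trans[OF sum.neutral]) auto
  next
    case True
    show ?thesis
    proof (cases "idx j < CARD('m)")
      case True2: True
      then obtain i0 :: 'm where i0: "idx i0 = idx j" using idx_surj by blast
      have "(\<Sum>i\<in>UNIV. (if idx (i::'m) = idx (j::'n) then s (idx i) else 0) *
                     (if idx i = idx j then s (idx i) else 0))
          = (\<Sum>i\<in>UNIV. if i = i0 then (s (idx j))^2 else 0)"
        by (intro sum.cong refl) (metis i0 idx_eq_iff power2_eq_square mult_zero_left)
      then show ?thesis using True by simp
    next
      case False2: False
      then have "s (idx j) = 0" using sz by auto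
      then show ?thesis using True by (intro trans[OF sum.neutral]) auto
    qed
  qed
  then show ?thesis
    by (simp add: matrix_matrix_mult_def vec_eq_iff transpose_def)
qed

lemma charpoly_svd:
  fixes Y :: "real^'n::finite^'m::finite"
  assumes "is_singvals Y s"
  shows "det (mat x - transpose Y ** Y) = (\<Prod>k<CARD('n). x - (s k)^2)"
proof -
  from assms obtain U V where U: "orthogonal_matrix (U::real^'m^'m)" and V: "orthogonal_matrix (V::real^'n^'n)"
    and Y: "Y = U ** (\<chi> i j. if idx i = idx j then s (idx i) else 0) ** transpose V"
    and sz: "\<forall>k\<ge>min CARD('m) CARD('n). s k = 0"
    unfolding is_singvals_def by blast
  define D :: "real^'n^'m" where "D = (\<chi> i j. if idx i = idx j then s (idx i) else 0)"
  define L :: "real^'n^'n" where "L = (\<chi> j k. if j = k then (s (idx j))^2 else 0)"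
  have DD: "transpose D ** D = L" unfolding D_def L_def by (rule DtD[OF sz])
  have YY: "transpose Y ** Y = V ** L ** transpose V"
  proof -
    have "transpose Y ** Y = V ** transpose D ** (transpose U ** U) ** D ** transpose V"
      unfolding Y D_def[symmetric] by (simp add: matrix_transpose_mul matrix_mul_assoc)
    also have "\<dots> = V ** L ** transpose V"
      using U DD by (simp add: orthogonal_matrix_def matrix_mul_assoc) (simp add: matrix_mul_assoc[symmetric])
    finally show ?thesis .
  qed
  have MX: "mat x = V ** mat x ** transpose V"
  proof -
    have "V ** mat x ** transpose V = (x *\<^sub>R V) ** transpose V" by (simp add: mm_mat_right)
    also have "\<dots> = x *\<^sub>R (V ** transpose V)" by (simp add: scalar_matrix_assoc)
    also have "\<dots> = x *\<^sub>R mat 1" using V by (simp add: orthogonal_matrix_def)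
    also have "\<dots> = mat x" by (simp add: vec_eq_iff mat_def)
    finally show ?thesis ..
  qed
  have "mat x - transpose Y ** Y = V ** (mat x - L) ** transpose V"
    by (subst MX) (simp add: YY mm_diff_left mm_diff_right)
  then have "det (mat x - transpose Y ** Y) = det V * det (mat x - L) * det (transpose V)"
    by (simp add: det_mul)
  also have "det V * det (transpose V) = 1"
    using V by (metis det_I det_mul orthogonal_matrix_def)
  then have "det V * det (mat x - L) * det (transpose V) = det (mat x - L)"
    by (metis mult.commute mult.left_neutral mult.assoc)
  also have "det (mat x - L) = (\<Prod>j\<in>UNIV. x - (s (idx (j::'n)))^2)"
    by (subst det_diagonal) (auto simp: L_def mat_def)
  also have "\<dots> = (\<Prod>k<CARD('n). x - (s k)^2)"
    using prod.reindex_bij_betw[OF idx_bij, of "\<lambda>k. x - (s k)^2"] by simp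
  finally show ?thesis .
qed

lemma prod_poly_eq:
  fixes a b :: "nat \<Rightarrow> real"
  assumes "\<forall>x. x \<noteq> z \<longrightarrow> (\<Prod>k<n. x - a k) = (\<Prod>k<n. x - b k)"
  shows "(\<Prod>k<n. x - a k) = (\<Prod>k<n. x - b k)"
proof -
  define P where "P = (\<Prod>k<n. [:- a k, 1:]) - (\<Prod>k<n. [:- b k, 1:])"
  have ev: "poly P x = (\<Prod>k<n. x - a k) - (\<Prod>k<n. x - b k)" for x
    by (simp add: P_def poly_prod)
  have "P = 0"
  proof (rule ccontr)
    assume "P \<noteq> 0"
    then have "finite {x. poly P x = 0}" by (rule poly_roots_finite)
    moreover have "UNIV - {z} \<subseteq> {x. poly P x = 0}" using assms ev by auto
    ultimately have "finite (UNIV - {z} :: real set)" by (rule rev_finite_subset)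
    then show False using infinite_UNIV_char_0 by auto
  qed
  then show ?thesis using ev[of x] by simp
qed

lemma sorted_roots:
  fixes a b :: "nat \<Rightarrow> real"
  assumes "\<forall>k. a (Suc k) \<le> a k" "\<forall>k. b (Suc k) \<le> b k"
    and "\<forall>x. (\<Prod>k<n. x - a k) = (\<Prod>k<n. x - b k)"
  shows "\<forall>k<n. a k = b k"
  using assms
proof (induction n arbitrary: a b)
  case 0
  then show ?case by simp
next
  case (Suc n)
  have ma: "a k \<le> a 0" for k by (rule lift_Suc_antimono_le[of a]) (use Suc.prems(1) in auto)
  have mb: "b k \<le> b 0" for k by (rule lift_Suc_antimono_le[of b]) (use Suc.prems(2) in auto)
  have "(\<Prod>k<Suc n. a 0 - b k) = (\<Prod>k<Suc n. a 0 - a k)" using Suc.prems(3) by metis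
  also have "\<dots> = 0" by (rule prod_zero) auto
  finally obtain j where "a 0 - b j = 0" by (metis (no_types, lifting) finite_lessThan prod_zero_iff)
  then have "a 0 \<le> b 0" using mb by auto
  have "(\<Prod>k<Suc n. b 0 - a k) = (\<Prod>k<Suc n. b 0 - b k)" using Suc.prems(3) by metis
  also have "\<dots> = 0" by (rule prod_zero) auto
  finally obtain j where "b 0 - a j = 0" by (metis (no_types, lifting) finite_lessThan prod_zero_iff)
  then have "b 0 \<le> a 0" using ma by auto
  have ab0: "a 0 = b 0" using \<open>a 0 \<le> b 0\<close> \<open>b 0 \<le> a 0\<close> by simp
  have split: "(\<Prod>k<Suc n. x - c k) = (x - c 0) * (\<Prod>k<n. x - c (Suc k))" for x and c :: "nat \<Rightarrow> real"
    by (rule prod.lessThan_Suc_shift)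
  have "\<forall>x. x \<noteq> a 0 \<longrightarrow> (\<Prod>k<n. x - a (Suc k)) = (\<Prod>k<n. x - b (Suc k))"
  proof (intro allI impI)
    fix x assume "x \<noteq> a 0"
    have "(x - a 0) * (\<Prod>k<n. x - a (Suc k)) = (x - a 0) * (\<Prod>k<n. x - b (Suc k))"
      using Suc.prems(3) split[of x a] split[of x b] ab0 by metis
    then show "(\<Prod>k<n. x - a (Suc k)) = (\<Prod>k<n. x - b (Suc k))" using \<open>x \<noteq> a 0\<close> by simp
  qed
  then have "\<forall>x. (\<Prod>k<n. x - a (Suc k)) = (\<Prod>k<n. x - b (Suc k))"
    using prod_poly_eq[where z="a 0" and n=n and a="\<lambda>k. a (Suc k)" and b="\<lambda>k. b (Suc k)"] by blast
  then have IH: "\<forall>k<n. a (Suc k) = b (Suc k)"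
    using Suc.IH[of "\<lambda>k. a (Suc k)" "\<lambda>k. b (Suc k)"] Suc.prems(1,2) by blast
  show ?case
  proof (intro allI impI)
    fix k assume "k < Suc n"
    then show "a k = b k" using IH ab0 by (cases k) auto
  qed
qed

lemma singvals_unique:
  fixes Y :: "real^'n::finite^'m::finite"
  assumes "is_singvals Y s" "is_singvals Y t"
  shows "s = t"
proof
  fix k
  have sp: "\<forall>k. 0 \<le> s k" "\<forall>k. s (Suc k) \<le> s k" "\<forall>k\<ge>min CARD('m) CARD('n). s k = 0"
    using assms(1) unfolding is_singvals_def by blast+
  have tp: "\<forall>k. 0 \<le> t k" "\<forall>k. t (Suc k) \<le> t k" "\<forall>k\<ge>min CARD('m) CARD('n). t k = 0"
    using assms(2) unfolding is_singvals_def by blast+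
  have "\<forall>x. (\<Prod>k<CARD('n). x - (s k)^2) = (\<Prod>k<CARD('n). x - (t k)^2)"
    using charpoly_svd[OF assms(1)] charpoly_svd[OF assms(2)] by metis
  moreover have "\<forall>k. (s (Suc k))^2 \<le> (s k)^2" using sp by (simp add: power_mono)
  moreover have "\<forall>k. (t (Suc k))^2 \<le> (t k)^2" using tp by (simp add: power_mono)
  ultimately have sq: "\<forall>k<CARD('n). (s k)^2 = (t k)^2"
    using sorted_roots[of "\<lambda>k. (s k)^2" "\<lambda>k. (t k)^2"] by blast
  show "s k = t k"
  proof (cases "k < CARD('n)")
    case True
    then have "(s k)^2 = (t k)^2" using sq by blast
    then show ?thesis using sp(1) tp(1) by (meson power2_eq_iff_nonneg)
  next
    case False
    then show ?thesis using sp(3) tp(3) by auto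
  qed
qed

lemma exists_orth_unit:
  fixes v :: "nat \<Rightarrow> real^'n::finite"
  assumes "k < CARD('n)"
  shows "\<exists>w. norm w = 1 \<and> (\<forall>i<k. w \<bullet> v i = 0)"
proof -
  let ?S = "v ` {..<k}"
  have "dim ?S \<le> card ?S" by (rule dim_le_card') simp
  also have "\<dots> \<le> k" using card_image_le[of "{..<k}" v] by simp
  finally have dS: "dim ?S < DIM(real^'n)" using assms by simp
  then obtain x where x: "x \<noteq> 0" and orth: "\<And>y. y \<in> span ?S \<Longrightarrow> orthogonal x y"
    using orthogonal_to_subspace_exists[OF dS] by blast
  have "\<forall>i<k. (x /\<^sub>R norm x) \<bullet> v i = 0"
    using orth by (auto simp: orthogonal_def span_base)
  moreover have "norm (x /\<^sub>R norm x) = 1" using x by simp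
  ultimately show ?thesis by blast
qed

lemma quad_zero:
  fixes p c :: real
  assumes "\<forall>t. 2*t*p + t^2*c \<le> 0"
  shows "p = 0"
proof -
  define q where "q = \<bar>c\<bar> + 1"
  have q0: "q > 0" by (simp add: q_def)
  have "2*(p/q)*p + (p/q)^2*c \<le> 0" using assms by blast
  then have "(2*(p/q)*p + (p/q)^2*c) * q^2 \<le> 0" using q0
    by (simp add: mult_nonpos_nonneg)
  moreover have "(2*(p/q)*p + (p/q)^2*c) * q^2 = p^2 * (2*q + c)" using q0
    by (simp add: field_simps power2_eq_square)
  ultimately have "p^2 * (2*q + c) \<le> 0" by simp
  moreover have "2*q + c > 0" unfolding q_def by (cases "c \<ge> 0") auto
  ultimately have "p^2 \<le> 0" by (simp add: mult_le_0_iff)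
  then show ?thesis by simp
qed

lemma variational:
  fixes Y :: "real^'n::finite^'m::finite"
  assumes bound: "\<forall>t::real. norm (Y *v (v + t *\<^sub>R w)) \<le> s * norm (v + t *\<^sub>R w)"
    and nv: "norm v = 1" and Yv: "norm (Y *v v) = s" and vw: "v \<bullet> w = 0" and s0: "0 \<le> s"
  shows "(Y *v v) \<bullet> (Y *v w) = 0"
proof -
  let ?p = "(Y *v v) \<bullet> (Y *v w)"
  let ?c = "(Y *v w) \<bullet> (Y *v w) - s^2 * (w \<bullet> w)"
  have "2*t*?p + t^2*?c \<le> 0" for t
  proof -
    have "(norm (Y *v (v + t *\<^sub>R w)))^2 \<le> (s * norm (v + t *\<^sub>R w))^2"
      using bound by (intro power_mono) auto
    moreover have "(norm (Y *v (v + t *\<^sub>R w)))^2 = s^2 + 2*t*?p + t^2 * ((Y *v w) \<bullet> (Y *v w))"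
    proof -
      have "Y *v (v + t *\<^sub>R w) = Y *v v + t *\<^sub>R (Y *v w)"
        by (simp add: matrix_vector_right_distrib matrix_vector_mult_scaleR)
      then have "(norm (Y *v (v + t *\<^sub>R w)))^2 = (Y *v v + t *\<^sub>R (Y *v w)) \<bullet> (Y *v v + t *\<^sub>R (Y *v w))"
        by (simp only: power2_norm_eq_inner)
      also have "\<dots> = (Y *v v) \<bullet> (Y *v v) + 2*t*?p + t^2 * ((Y *v w) \<bullet> (Y *v w))"
        by (simp add: inner_add_left inner_add_right inner_commute algebra_simps power2_eq_square)
      also have "(Y *v v) \<bullet> (Y *v v) = s^2" using Yv by (metis power2_norm_eq_inner)
      finally show ?thesis .
    qed
    moreover have "(s * norm (v + t *\<^sub>R w))^2 = s^2 * (1 + t^2 * (w \<bullet> w))"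
    proof -
      have "(norm (v + t *\<^sub>R w))^2 = (v + t *\<^sub>R w) \<bullet> (v + t *\<^sub>R w)"
        by (simp only: power2_norm_eq_inner)
      also have "\<dots> = v \<bullet> v + 2*t*(v \<bullet> w) + t^2 * (w \<bullet> w)"
        by (simp add: inner_add_left inner_add_right inner_commute algebra_simps power2_eq_square)
      also have "v \<bullet> v = 1" using nv by (metis power2_norm_eq_inner one_power2)
      finally show ?thesis using vw by (simp add: power_mult_distrib)
    qed
    ultimately show ?thesis by (simp add: algebra_simps)
  qed
  then show ?thesis by (intro quad_zero) auto
qed

definition orthn :: "(nat \<Rightarrow> 'a::real_inner) \<Rightarrow> nat \<Rightarrow> bool" where
  "orthn v k \<longleftrightarrow> (\<forall>i<k. \<forall>j<k. v i \<bullet> v j = (if i = j then 1 else 0))"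

lemma orthn_upd:
  assumes "orthn v k" "\<forall>i<k. x \<bullet> v i = 0" "norm x = 1"
  shows "orthn (v(k := x)) (Suc k)"
  using assms unfolding orthn_def
  by (auto simp: less_Suc_eq inner_commute norm_eq_1)

definition greedy_inv :: "real^'n::finite^'m::finite \<Rightarrow> nat \<Rightarrow> (nat \<Rightarrow> real^'n) \<Rightarrow> (nat \<Rightarrow> real^'m) \<Rightarrow> (nat \<Rightarrow> real) \<Rightarrow> bool" where
  "greedy_inv Y k v u s \<longleftrightarrow> orthn v k \<and> orthn u k \<and> (\<forall>j<k. Y *v v j = s j *\<^sub>R u j) \<and>
     (\<forall>j<k. 0 \<le> s j) \<and> (\<forall>j. Suc j < k \<longrightarrow> s (Suc j) \<le> s j) \<and>
     (\<forall>j<k. \<forall>w. (\<forall>i<k. w \<bullet> v i = 0) \<longrightarrow> (Y *v w) \<bullet> u j = 0) \<and>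
     (0 < k \<longrightarrow> (\<forall>w. (\<forall>i<k. w \<bullet> v i = 0) \<longrightarrow> norm (Y *v w) \<le> s (k - 1) * norm w))"

lemma greedy_step:
  fixes Y :: "real^'n::finite^'m::finite"
  assumes inv: "greedy_inv Y k v u s" and kn: "k < CARD('n)" and nm: "CARD('n) \<le> CARD('m)"
  shows "\<exists>v' u' s'. greedy_inv Y (Suc k) v' u' s'"
proof -
  from inv have ov: "orthn v k" and ou: "orthn u k" and Yv: "\<forall>j<k. Y *v v j = s j *\<^sub>R u j"
    and sn: "\<forall>j<k. 0 \<le> s j" and sm: "\<forall>j. Suc j < k \<longrightarrow> s (Suc j) \<le> s j"
    and I1: "\<forall>j<k. \<forall>w. (\<forall>i<k. w \<bullet> v i = 0) \<longrightarrow> (Y *v w) \<bullet> u j = 0"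
    and I2: "0 < k \<longrightarrow> (\<forall>w. (\<forall>i<k. w \<bullet> v i = 0) \<longrightarrow> norm (Y *v w) \<le> s (k - 1) * norm w)"
    unfolding greedy_inv_def by blast+
  define W where "W = {w::real^'n. \<forall>i<k. w \<bullet> v i = 0}"
  define K where "K = W \<inter> sphere 0 1"
  have W_eq: "W = (\<Inter>i\<in>{..<k}. {w. v i \<bullet> w = 0})" unfolding W_def by (auto simp: inner_commute)
  have "closed W" unfolding W_eq by (intro closed_INT ballI closed_hyperplane)
  then have cK: "compact K" unfolding K_def by (intro closed_Int_compact) auto
  obtain w0 where "norm w0 = 1" "\<forall>i<k. w0 \<bullet> v i = 0" using exists_orth_unit[OF kn] by blast
  then have neK: "K \<noteq> {}" unfolding K_def W_def by auto
  have "continuous_on K (\<lambda>w. norm (Y *v w))" by (intro continuous_intros)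
  then obtain vk where vkK: "vk \<in> K" and vkmax: "\<forall>w\<in>K. norm (Y *v w) \<le> norm (Y *v vk)"
    using continuous_attains_sup[OF cK neK] by blast
  define sk where "sk = norm (Y *v vk)"
  have vkW: "\<forall>i<k. vk \<bullet> v i = 0" and nvk: "norm vk = 1" using vkK by (auto simp: K_def W_def)
  have Wbound: "norm (Y *v w) \<le> sk * norm w" if "\<forall>i<k. w \<bullet> v i = 0" for w
  proof (cases "w = 0")
    case True then show ?thesis by simp
  next
    case False
    have "w /\<^sub>R norm w \<in> K" using that False by (auto simp: K_def W_def)
    then have "norm (Y *v (w /\<^sub>R norm w)) \<le> sk" using vkmax sk_def by blast
    moreover have "Y *v (w /\<^sub>R norm w) = (1 / norm w) *\<^sub>R (Y *v w)"
      by (simp add: matrix_vector_mult_scaleR divide_inverse)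
    ultimately have "norm (Y *v w) / norm w \<le> sk" by simp
    then show ?thesis using False by (simp add: divide_le_eq mult.commute)
  qed
  have sk0: "0 \<le> sk" by (simp add: sk_def)
  have skle: "sk \<le> s (k - 1)" if "0 < k"
    using I2 that vkW nvk by (simp add: sk_def) (metis mult.right_neutral)
  obtain uk where nuk: "norm uk = 1" and uku: "\<forall>i<k. uk \<bullet> u i = 0"
    and Yvk: "Y *v vk = sk *\<^sub>R uk"
  proof (cases "sk > 0")
    case True
    define uk where "uk = (1 / sk) *\<^sub>R (Y *v vk)"
    show ?thesis
    proof (rule that[of uk])
      show "norm uk = 1" using True by (simp add: uk_def sk_def)
      show "\<forall>i<k. uk \<bullet> u i = 0" using I1 vkW by (simp add: uk_def)
      show "Y *v vk = sk *\<^sub>R uk" using True by (simp add: uk_def)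
    qed
  next
    case False
    then have "sk = 0" using sk0 by simp
    then have "Y *v vk = 0" by (simp add: sk_def)
    obtain uk where "norm uk = 1" "\<forall>i<k. uk \<bullet> u i = 0" using exists_orth_unit[of k u] kn nm by auto
    then show ?thesis using that[of uk] \<open>Y *v vk = 0\<close> \<open>sk = 0\<close> by simp
  qed
  define v' where "v' = v(k := vk)"
  define u' where "u' = u(k := uk)"
  define s' where "s' = s(k := sk)"
  have W'W: "\<forall>i<k. w \<bullet> v i = 0" and wvk: "w \<bullet> vk = 0" if "\<forall>i<Suc k. w \<bullet> v' i = 0" for w
    using that by (auto simp: v'_def less_Suc_eq)
  have "greedy_inv Y (Suc k) v' u' s'"
    unfolding greedy_inv_def
  proof (intro conjI)
    show "orthn v' (Suc k)" unfolding v'_def by (rule orthn_upd[OF ov vkW nvk])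
    show "orthn u' (Suc k)" unfolding u'_def by (rule orthn_upd[OF ou uku nuk])
    show "\<forall>j<Suc k. Y *v v' j = s' j *\<^sub>R u' j"
      using Yv Yvk by (auto simp: v'_def u'_def s'_def less_Suc_eq)
    show "\<forall>j<Suc k. 0 \<le> s' j" using sn sk0 by (auto simp: s'_def less_Suc_eq)
    show "\<forall>j. Suc j < Suc k \<longrightarrow> s' (Suc j) \<le> s' j"
    proof (intro allI impI)
      fix j assume "Suc j < Suc k"
      then have jk: "j < k" by simp
      show "s' (Suc j) \<le> s' j"
      proof (cases "Suc j = k")
        case True
        then show ?thesis using skle[of] jk by (auto simp: s'_def)
      next
        case False
        then show ?thesis using sm jk by (auto simp: s'_def)
      qed
    qed
    show "\<forall>j<Suc k. \<forall>w. (\<forall>i<Suc k. w \<bullet> v' i = 0) \<longrightarrow> (Y *v w) \<bullet> u' j = 0"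
    proof (intro allI impI)
      fix j w assume jk: "j < Suc k" and ww: "\<forall>i<Suc k. w \<bullet> v' i = 0"
      have wW: "\<forall>i<k. w \<bullet> v i = 0" and wv: "w \<bullet> vk = 0" using W'W[OF ww] wvk[OF ww] by auto
      show "(Y *v w) \<bullet> u' j = 0"
      proof (cases "j < k")
        case True then show ?thesis using I1 wW by (simp add: u'_def)
      next
        case False
        then have j: "j = k" using jk by simp
        show ?thesis
        proof (cases "sk > 0")
          case True
          have "\<forall>t::real. norm (Y *v (vk + t *\<^sub>R w)) \<le> sk * norm (vk + t *\<^sub>R w)"
            using vkW wW by (intro allI Wbound) (simp add: inner_add_left)
          then have "(Y *v vk) \<bullet> (Y *v w) = 0"
            by (rule variational[OF _ nvk sk_def[symmetric] _ sk0]) (use wv in \<open>simp add: inner_commute\<close>)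
          then have "sk * (uk \<bullet> (Y *v w)) = 0" using Yvk by simp
          then show ?thesis using True j by (simp add: u'_def inner_commute)
        next
          case False
          then have "norm (Y *v w) \<le> 0" using Wbound[OF wW] sk0 by simp
          then show ?thesis by simp
        qed
      qed
    qed
    show "0 < Suc k \<longrightarrow> (\<forall>w. (\<forall>i<Suc k. w \<bullet> v' i = 0) \<longrightarrow> norm (Y *v w) \<le> s' (Suc k - 1) * norm w)"
      using Wbound W'W by (simp add: s'_def)
  qed
  then show ?thesis by blast
qed

lemma greedy:
  fixes Y :: "real^'n::finite^'m::finite"
  assumes "k \<le> CARD('n)" "CARD('n) \<le> CARD('m)"
  shows "\<exists>v u s. greedy_inv Y k v u s"
  using assms
proof (induction k)
  case 0
  show ?case by (auto simp: greedy_inv_def orthn_def)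
next
  case (Suc k)
  then obtain v u s where "greedy_inv Y k v u s" by auto
  then show ?case using greedy_step[of Y k v u s] Suc.prems by simp
qed

lemma complete_orthn:
  fixes u :: "nat \<Rightarrow> real^'m::finite"
  assumes "orthn u k" "k \<le> CARD('m)"
  shows "\<exists>u'. orthn u' CARD('m) \<and> (\<forall>i<k. u' i = u i)"
proof -
  have "\<forall>j. k \<le> j \<longrightarrow> j \<le> CARD('m) \<longrightarrow> (\<exists>u'. orthn u' j \<and> (\<forall>i<k. u' i = u i))"
  proof (intro allI)
    fix j show "k \<le> j \<longrightarrow> j \<le> CARD('m) \<longrightarrow> (\<exists>u'. orthn u' j \<and> (\<forall>i<k. u' i = u i))"
    proof (induction j)
      case 0 then show ?case using assms(1) by auto
    next
      case (Suc j)
      show ?case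
      proof (intro impI)
        assume kj: "k \<le> Suc j" and jm: "Suc j \<le> CARD('m)"
        show "\<exists>u'. orthn u' (Suc j) \<and> (\<forall>i<k. u' i = u i)"
        proof (cases "k = Suc j")
          case True then show ?thesis using assms(1) by auto
        next
          case False
          then obtain u' where o: "orthn u' j" and ag: "\<forall>i<k. u' i = u i" using Suc.IH kj jm by auto
          obtain x where "norm x = 1" "\<forall>i<j. x \<bullet> u' i = 0" using exists_orth_unit[of j u'] jm by auto
          then have "orthn (u'(j := x)) (Suc j)" by (intro orthn_upd[OF o])
          moreover have "\<forall>i<k. (u'(j := x)) i = u i" using ag False kj by auto
          ultimately show ?thesis by blast
        qed
      qed
    qed
  qed
  then show ?thesis using assms(2) by blast
qed

lemma svd_exists_le:
  fixes Y :: "real^'n::finite^'m::finite"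
  assumes nm: "CARD('n) \<le> CARD('m)"
  shows "\<exists>s. is_singvals Y s"
proof -
  obtain v u s where g: "greedy_inv Y CARD('n) v u s" using greedy[OF order.refl nm] by blast
  from g have ov: "orthn v CARD('n)" and ou: "orthn u CARD('n)"
    and Yv: "\<forall>j<CARD('n). Y *v v j = s j *\<^sub>R u j"
    and sn: "\<forall>j<CARD('n). 0 \<le> s j" and sm: "\<forall>j. Suc j < CARD('n) \<longrightarrow> s (Suc j) \<le> s j"
    unfolding greedy_inv_def by blast+
  obtain u' where ou': "orthn u' CARD('m)" and ag: "\<forall>i<CARD('n). u' i = u i"
    using complete_orthn[OF ou nm] by blast
  define s' where "s' k = (if k < CARD('n) then s k else 0)" for k
  define V :: "real^'n^'n" where "V = (\<chi> p j. v (idx j) $ p)"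
  define U :: "real^'m^'m" where "U = (\<chi> p i. u' (idx i) $ p)"
  define D :: "real^'n^'m" where "D = (\<chi> i j. if idx i = idx j then s' (idx i) else 0)"
  have colV: "column j V = v (idx j)" for j by (simp add: V_def column_def vec_eq_iff)
  have colU: "column i U = u' (idx i)" for i by (simp add: U_def column_def vec_eq_iff)
  have oV: "orthogonal_matrix V"
    unfolding orthogonal_matrix_orthonormal_columns colV
    using ov by (auto simp: orthn_def orthogonal_def norm_eq_1)
  have oU: "orthogonal_matrix U"
    unfolding orthogonal_matrix_orthonormal_columns colU
    using ou' by (auto simp: orthn_def orthogonal_def norm_eq_1)
  have YVUD: "Y ** V = U ** D"
  proof -
    have "(Y ** V) $ p $ j = (U ** D) $ p $ j" for p j
    proof -
      have "(Y ** V) $ p $ j = (Y *v v (idx j)) $ p"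
        by (simp add: matrix_matrix_mult_def matrix_vector_mult_def V_def)
      also have "\<dots> = s (idx j) * u (idx j) $ p" using Yv by simp
      also have "\<dots> = (U ** D) $ p $ j"
      proof -
        obtain i0 :: 'm where i0: "idx i0 = idx j" using idx_surj[of "idx j"] nm
          by (metis idx_less order_less_le_trans)
        have hh: "idx i = idx j \<longleftrightarrow> i = i0" for i :: 'm using i0 by (metis idx_eq_iff)
        have "(U ** D) $ p $ j = (\<Sum>i::'m\<in>UNIV. u' (idx i) $ p * (if idx i = idx j then s' (idx i) else 0))"
          by (simp add: matrix_matrix_mult_def U_def D_def)
        also have "\<dots> = (\<Sum>i::'m\<in>UNIV. if i = i0 then u' (idx i) $ p * s' (idx i) else 0)"
          by (rule sum.cong) (auto simp: hh)
        also have "\<dots> = u' (idx j) $ p * s' (idx j)" using i0 by simp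
        also have "\<dots> = s (idx j) * u (idx j) $ p" using ag by (simp add: s'_def)
        finally show ?thesis by simp
      qed
      finally show ?thesis .
    qed
    then show ?thesis by (simp add: vec_eq_iff)
  qed
  have "Y = Y ** (V ** transpose V)" using oV by (simp add: orthogonal_matrix_def)
  also have "\<dots> = U ** D ** transpose V" by (simp add: matrix_mul_assoc YVUD)
  finally have Yeq: "Y = U ** D ** transpose V" .
  have "is_singvals Y s'"
    unfolding is_singvals_def
  proof (intro conjI)
    show "\<forall>k. 0 \<le> s' k" using sn by (simp add: s'_def)
    show "\<forall>k. s' (Suc k) \<le> s' k" using sm sn by (auto simp: s'_def)
    show "\<forall>k\<ge>min CARD('m) CARD('n). s' k = 0" using nm by (simp add: s'_def min_def)
    show "\<exists>(U::real^'m^'m) (V::real^'n^'n). orthogonal_matrix U \<and> orthogonal_matrix V \<and>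
        Y = U ** (\<chi> i j. if idx i = idx j then s' (idx i) else 0) ** transpose V"
      using oU oV Yeq unfolding D_def by blast
  qed
  then show ?thesis by blast
qed

lemma is_singvals_transpose:
  fixes Y :: "real^'n::finite^'m::finite"
  assumes "is_singvals (transpose Y) s"
  shows "is_singvals Y s"
proof -
  from assms obtain U V where U: "orthogonal_matrix (U::real^'n^'n)" and V: "orthogonal_matrix (V::real^'m^'m)"
    and Y: "transpose Y = U ** (\<chi> i j. if idx i = idx j then s (idx i) else 0) ** transpose V"
    and p: "\<forall>k. 0 \<le> s k" "\<forall>k. s (Suc k) \<le> s k" "\<forall>k\<ge>min CARD('n) CARD('m). s k = 0"
    unfolding is_singvals_def by blast
  have "Y = transpose (transpose Y)" by simp
  also have "\<dots> = V ** transpose (\<chi> i j. if idx i = idx j then s (idx i) else 0 :: real^'m^'n) ** transpose U"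
    unfolding Y by (simp add: matrix_transpose_mul matrix_mul_assoc)
  also have "transpose (\<chi> i j. if idx i = idx j then s (idx i) else 0 :: real^'m^'n)
      = (\<chi> i j. if idx i = idx j then s (idx i) else 0 :: real^'n^'m)"
    by (auto simp: transpose_def vec_eq_iff)
  finally show ?thesis unfolding is_singvals_def using U V p by (auto simp: min.commute)
qed

lemma singvals_ok: "is_singvals (Y::real^'n::finite^'m::finite) (singvals Y)"
proof -
  have ex: "\<exists>s. is_singvals Y s"
  proof (cases "CARD('n) \<le> CARD('m)")
    case True then show ?thesis by (rule svd_exists_le)
  next
    case False
    then obtain s where "is_singvals (transpose Y) s" using svd_exists_le[of "transpose Y"] by auto
    then show ?thesis using is_singvals_transpose by blast
  qed
  have "\<exists>!s. is_singvals Y s" using ex singvals_unique by blast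
  then show ?thesis unfolding singvals_def by (rule theI')
qed

theorem lemmaC1:
  fixes f :: "real^'d::finite \<Rightarrow> real"
    and wbar :: "real^'m::finite" and xbar :: "real^'n::finite"
    and \<kappa> :: real
  assumes dim: "CARD('d) = min CARD('m) CARD('n)"
    and cvx: "convex_on UNIV f"
    and sym: "symmetric_fun f"
    and sgn: "sign_invariant f"
    and kpos: "\<kappa> > 0"
    and sharp: "\<forall>(w::real^'m) (x::real^'n).
        f (sigma_vec (outer w x - outer wbar xbar)) - f (sigma_vec (outer wbar xbar - outer wbar xbar))
          \<ge> \<kappa> * norm (outer w x - outer wbar xbar)"
  shows "\<forall>(w::real^'m) (x::real^'n) Y. outer w x \<noteq> outer wbar xbar \<longrightarrow>
           Y \<in> subdiff (\<lambda>A. f (sigma_vec A :: real^'d)) (outer w x - outer wbar xbar) \<longrightarrow>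
           singvals Y 0 + singvals Y 1 \<ge> \<kappa>"
proof (intro allI impI)
  fix w :: "real^'m" and x :: "real^'n" and Y
  assume ne: "outer w x \<noteq> outer wbar xbar"
    and Ysub: "Y \<in> subdiff (\<lambda>A. f (sigma_vec A :: real^'d)) (outer w x - outer wbar xbar)"
  let ?X = "outer w x - outer wbar xbar"
  have "f (sigma_vec (0::real^'n^'m) :: real^'d) \<ge> f (sigma_vec ?X) + inner Y (0 - ?X)"
    using Ysub unfolding subdiff_def by blast
  moreover have "f (sigma_vec ?X :: real^'d) - f (sigma_vec (0::real^'n^'m)) \<ge> \<kappa> * norm ?X"
    using sharp by simp
  ultimately have "\<kappa> * norm ?X \<le> inner Y ?X" by (simp add: inner_diff_right)
  also have "\<dots> \<le> (singvals Y 0 + singvals Y 1) * norm ?X"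
    by (rule is_singvals_bound[OF singvals_ok])
  finally have "\<kappa> * norm ?X \<le> (singvals Y 0 + singvals Y 1) * norm ?X" .
  moreover have "norm ?X > 0" using ne by simp
  ultimately show "singvals Y 0 + singvals Y 1 \<ge> \<kappa>" by simp
qed

end
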